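(* Let $\mathcal{X}$ be a subset of a normed space, $\mathcal{H}$ an RKHS on $\mathcal{X}$ whose kernel is radial, $\mathfrak{K}(x,y)=\mathfrak{K}_0(\|x-y\|)$ with $\mathfrak{K}_0$ injective, and let $F:\mathcal{X}\to\mathcal{X}$ be a bijection. Then the Koopman operator $\mathcal{K}_F$ on $\mathcal{H}$ is unitary if and only if $F$ is an isometry, i.e. $\|F(x)-F(y)\|=\|x-y\|$ for all $x,y\in\mathcal{X}$.
   Context: $\mathcal{H}$ is a reproducing kernel Hilbert space of complex-valued functions on $\mathcal{X}$ with kernel $\mathfrak{K}$. The Koopman operator is $\mathcal{K}_Fg=g\circ F$ with domain $\{g\in\mathcal{H}:g\circ F\in\mathcal{H}\}$; unitary means bounded, everywhere defined, with $\mathcal{K}_F\mathcal{K}_F^*=\mathcal{K}_F^*\mathcal{K}_F=I$. *)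

theory Defs
  imports "HOL-Analysis.Analysis"
begin

text \<open>Functions are represented as total functions that vanish outside X (extensional
  convention).\<close>

definition ksec :: "'a set \<Rightarrow> ('a \<Rightarrow> 'a \<Rightarrow> complex) \<Rightarrow> 'a \<Rightarrow> ('a \<Rightarrow> complex)" where
  "ksec X K y = (\<lambda>x. if x \<in> X then K x y else 0)"

definition hnorm :: "(('a \<Rightarrow> complex) \<Rightarrow> ('a \<Rightarrow> complex) \<Rightarrow> complex) \<Rightarrow> ('a \<Rightarrow> complex) \<Rightarrow> real" where
  "hnorm ip f = sqrt (Re (ip f f))"

definition is_rkhs ::
  "'a set \<Rightarrow> ('a \<Rightarrow> complex) set \<Rightarrow> (('a \<Rightarrow> complex) \<Rightarrow> ('a \<Rightarrow> complex) \<Rightarrow> complex)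
     \<Rightarrow> ('a \<Rightarrow> 'a \<Rightarrow> complex) \<Rightarrow> bool" where
  "is_rkhs X H ip K \<longleftrightarrow>
     \<comment> \<open>functions on X (vanishing outside X)\<close>
     (\<forall>f\<in>H. \<forall>x. x \<notin> X \<longrightarrow> f x = 0) \<and>
     \<comment> \<open>complex vector space\<close>
     (\<lambda>x. 0) \<in> H \<and>
     (\<forall>f\<in>H. \<forall>g\<in>H. (\<lambda>x. f x + g x) \<in> H) \<and>
     (\<forall>c. \<forall>f\<in>H. (\<lambda>x. c * f x) \<in> H) \<and>
     \<comment> \<open>inner product\<close>
     (\<forall>f\<in>H. \<forall>g\<in>H. \<forall>h\<in>H. ip (\<lambda>x. f x + g x) h = ip f h + ip g h) \<and>
     (\<forall>c. \<forall>f\<in>H. \<forall>g\<in>H. ip (\<lambda>x. c * f x) g = c * ip f g) \<and>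
     (\<forall>f\<in>H. \<forall>g\<in>H. ip g f = cnj (ip f g)) \<and>
     (\<forall>f\<in>H. Im (ip f f) = 0 \<and> Re (ip f f) \<ge> 0) \<and>
     (\<forall>f\<in>H. ip f f = 0 \<longrightarrow> f = (\<lambda>x. 0)) \<and>
     \<comment> \<open>completeness\<close>
     (\<forall>s. (\<forall>n. s n \<in> H) \<longrightarrow>
          (\<forall>e>0. \<exists>N. \<forall>m\<ge>N. \<forall>n\<ge>N. hnorm ip (\<lambda>x. s m x - s n x) < e) \<longrightarrow>
          (\<exists>l\<in>H. (\<lambda>n. hnorm ip (\<lambda>x. s n x - l x)) \<longlonglongrightarrow> 0)) \<and>
     \<comment> \<open>reproducing kernel\<close>
     (\<forall>y\<in>X. ksec X K y \<in> H) \<and>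
     (\<forall>f\<in>H. \<forall>y\<in>X. f y = ip f (ksec X K y))"

definition koopman :: "'a set \<Rightarrow> ('a \<Rightarrow> 'a) \<Rightarrow> ('a \<Rightarrow> complex) \<Rightarrow> ('a \<Rightarrow> complex)" where
  "koopman X F g = (\<lambda>x. if x \<in> X then g (F x) else 0)"

definition unitary_op ::
  "('a \<Rightarrow> complex) set \<Rightarrow> (('a \<Rightarrow> complex) \<Rightarrow> ('a \<Rightarrow> complex) \<Rightarrow> complex)
     \<Rightarrow> (('a \<Rightarrow> complex) \<Rightarrow> ('a \<Rightarrow> complex)) \<Rightarrow> bool" where
  "unitary_op H ip T \<longleftrightarrow>
     (\<forall>f\<in>H. T f \<in> H) \<and>
     (\<forall>f\<in>H. \<forall>g\<in>H. T (\<lambda>x. f x + g x) = (\<lambda>x. T f x + T g x)) \<and>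
     (\<forall>c. \<forall>f\<in>H. T (\<lambda>x. c * f x) = (\<lambda>x. c * T f x)) \<and>
     (\<exists>C. \<forall>f\<in>H. hnorm ip (T f) \<le> C * hnorm ip f) \<and>
     (\<exists>S. (\<forall>g\<in>H. S g \<in> H) \<and>
          (\<forall>f\<in>H. \<forall>g\<in>H. ip (T f) g = ip f (S g)) \<and>
          (\<forall>f\<in>H. T (S f) = f \<and> S (T f) = f))"

end

theory Submission imports Defs begin

inductive_set kspan :: "'a set \<Rightarrow> ('a \<Rightarrow> 'a \<Rightarrow> complex) \<Rightarrow> ('a \<Rightarrow> complex) set"
  for X K where
  kzero: "(\<lambda>x. 0) \<in> kspan X K"
| kstep: "v \<in> kspan X K \<Longrightarrow> y \<in> X \<Longrightarrow> (\<lambda>x. v x + c * ksec X K y x) \<in> kspan X K"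

locale rk =
  fixes X :: "'a set" and H :: "('a \<Rightarrow> complex) set"
    and ip :: "('a \<Rightarrow> complex) \<Rightarrow> ('a \<Rightarrow> complex) \<Rightarrow> complex"
    and K :: "'a \<Rightarrow> 'a \<Rightarrow> complex"
  assumes R: "is_rkhs X H ip K"
begin

abbreviation N where "N f \<equiv> Re (ip f f)"

lemma outside: "f \<in> H \<Longrightarrow> x \<notin> X \<Longrightarrow> f x = 0"
  using R unfolding is_rkhs_def by auto
lemma zero_in: "(\<lambda>x. 0) \<in> H"
  using R unfolding is_rkhs_def by blast
lemma add_in: "f \<in> H \<Longrightarrow> g \<in> H \<Longrightarrow> (\<lambda>x. f x + g x) \<in> H"
  using R unfolding is_rkhs_def by blast
lemma scale_in: "f \<in> H \<Longrightarrow> (\<lambda>x. c * f x) \<in> H"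
  using R unfolding is_rkhs_def by blast
lemma addsc_in: "f \<in> H \<Longrightarrow> g \<in> H \<Longrightarrow> (\<lambda>x. f x + c * g x) \<in> H"
  using add_in[of f "\<lambda>x. c * g x"] scale_in by blast
lemma diff_in: "f \<in> H \<Longrightarrow> g \<in> H \<Longrightarrow> (\<lambda>x. f x - g x) \<in> H"
  using addsc_in[of f g "-1"] by simp
lemma ip_add_l: "f \<in> H \<Longrightarrow> g \<in> H \<Longrightarrow> h \<in> H \<Longrightarrow> ip (\<lambda>x. f x + g x) h = ip f h + ip g h"
  using R unfolding is_rkhs_def by blast
lemma ip_scale_l: "f \<in> H \<Longrightarrow> g \<in> H \<Longrightarrow> ip (\<lambda>x. c * f x) g = c * ip f g"
  using R unfolding is_rkhs_def by blast
lemma ip_cnj: "f \<in> H \<Longrightarrow> g \<in> H \<Longrightarrow> ip g f = cnj (ip f g)"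
  using R unfolding is_rkhs_def by blast
lemma ip_self: "f \<in> H \<Longrightarrow> Im (ip f f) = 0 \<and> Re (ip f f) \<ge> 0"
  using R unfolding is_rkhs_def by blast
lemma N_nonneg: "f \<in> H \<Longrightarrow> N f \<ge> 0" using ip_self by blast
lemma ip_self_real: "f \<in> H \<Longrightarrow> ip f f = complex_of_real (N f)"
  using ip_self by (simp add: complex_eq_iff)
lemma ip_zero_eq: "f \<in> H \<Longrightarrow> ip f f = 0 \<Longrightarrow> f = (\<lambda>x. 0)"
  using R unfolding is_rkhs_def by blast
lemma N_zero_eq: "f \<in> H \<Longrightarrow> N f = 0 \<Longrightarrow> f = (\<lambda>x. 0)"
  using ip_zero_eq ip_self_real by force
lemma complete: "(\<forall>n. s n \<in> H) \<Longrightarrow>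
          (\<forall>e>0. \<exists>N. \<forall>m\<ge>N. \<forall>n\<ge>N. hnorm ip (\<lambda>x. s m x - s n x) < e) \<Longrightarrow>
          (\<exists>l\<in>H. (\<lambda>n. hnorm ip (\<lambda>x. s n x - l x)) \<longlonglongrightarrow> 0)"
  using R unfolding is_rkhs_def by blast
lemma ksec_in: "y \<in> X \<Longrightarrow> ksec X K y \<in> H"
  using R unfolding is_rkhs_def by blast
lemma repro: "f \<in> H \<Longrightarrow> y \<in> X \<Longrightarrow> f y = ip f (ksec X K y)"
  using R unfolding is_rkhs_def by blast

lemma ext_eq: "f \<in> H \<Longrightarrow> g \<in> H \<Longrightarrow> (\<And>x. x \<in> X \<Longrightarrow> f x = g x) \<Longrightarrow> f = g"
  using outside by (metis ext)

lemma ip_add_r: assumes "f \<in> H" "g \<in> H" "h \<in> H"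
  shows "ip h (\<lambda>x. f x + g x) = ip h f + ip h g"
proof -
  have "ip h (\<lambda>x. f x + g x) = cnj (ip (\<lambda>x. f x + g x) h)"
    using ip_cnj[OF add_in[OF assms(1,2)] assms(3)] .
  also have "\<dots> = cnj (ip f h) + cnj (ip g h)" using ip_add_l[OF assms] by simp
  also have "\<dots> = ip h f + ip h g" using ip_cnj[OF assms(1) assms(3)] ip_cnj[OF assms(2) assms(3)] by simp
  finally show ?thesis .
qed
lemma ip_scale_r: assumes "f \<in> H" "g \<in> H"
  shows "ip g (\<lambda>x. c * f x) = cnj c * ip g f"
proof -
  have "ip g (\<lambda>x. c * f x) = cnj (ip (\<lambda>x. c * f x) g)"
    using ip_cnj[OF scale_in[OF assms(1)] assms(2)] .
  also have "\<dots> = cnj (c * ip f g)" using ip_scale_l[OF assms] by simp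
  also have "\<dots> = cnj c * ip g f" using ip_cnj[OF assms(1) assms(2)] by simp
  finally show ?thesis .
qed

lemma ip_addsc_l: "f \<in> H \<Longrightarrow> g \<in> H \<Longrightarrow> h \<in> H \<Longrightarrow> ip (\<lambda>x. f x + c * g x) h = ip f h + c * ip g h"
  using ip_add_l[of f "\<lambda>x. c * g x" h] scale_in ip_scale_l by simp

lemma N_expand: assumes "f \<in> H" "g \<in> H"
  shows "N (\<lambda>x. f x + c * g x) = N f + 2 * Re (cnj c * ip f g) + (cmod c)^2 * N g"
proof -
  have cg: "(\<lambda>x. c * g x) \<in> H" using assms scale_in by blast
  have "ip (\<lambda>x. f x + c * g x) (\<lambda>x. f x + c * g x) =
     ip f f + cnj c * ip f g + c * ip g f + c * cnj c * ip g g"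
    using assms cg
    by (simp add: ip_add_l ip_add_r ip_scale_l ip_scale_r add_in algebra_simps)
  also have "ip g f = cnj (ip f g)" using assms ip_cnj by blast
  finally have e: "ip (\<lambda>x. f x + c * g x) (\<lambda>x. f x + c * g x) =
     ip f f + cnj c * ip f g + c * cnj (ip f g) + c * cnj c * ip g g" .
  have "Re (c * cnj (ip f g)) = Re (cnj c * ip f g)"
    by simp
  moreover have "Re (c * cnj c * ip g g) = (cmod c)^2 * N g"
    using ip_self_real[OF assms(2)] by (simp add: complex_mult_cnj cmod_def)
  ultimately show ?thesis unfolding e by simp
qed

lemma ip_zero_l: "f \<in> H \<Longrightarrow> ip (\<lambda>x. 0) f = 0"
  using ip_scale_l[of "\<lambda>x. 0" f 0] zero_in by simp
lemma ip_zero_r: "f \<in> H \<Longrightarrow> ip f (\<lambda>x. 0) = 0"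
proof -
  assume f: "f \<in> H"
  have "ip f (\<lambda>x. 0) = cnj (ip (\<lambda>x. 0) f)" using ip_cnj[OF zero_in f] .
  then show ?thesis using ip_zero_l[OF f] by simp
qed

lemma N_scale: "f \<in> H \<Longrightarrow> N (\<lambda>x. c * f x) = (cmod c)^2 * N f"
  using N_expand[of "\<lambda>x. 0" f c] zero_in ip_zero_l by simp

lemma hnorm_sq: assumes "f \<in> H" shows "(hnorm ip f)^2 = N f"
  unfolding hnorm_def using N_nonneg[OF assms] real_sqrt_pow2 by blast
lemma hnorm_nonneg: "f \<in> H \<Longrightarrow> hnorm ip f \<ge> 0"
  unfolding hnorm_def using N_nonneg by simp

lemma CS: assumes "f \<in> H" "g \<in> H" shows "cmod (ip f g) \<le> hnorm ip f * hnorm ip g"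
proof (cases "N g = 0")
  case True
  then have "g = (\<lambda>x. 0)" using N_zero_eq assms by blast
  then show ?thesis using ip_zero_r assms by (simp add: hnorm_nonneg assms)
next
  case False
  define a where "a = ip f g"
  define ng where "ng = N g"
  have ng: "ng > 0" using False N_nonneg[OF assms(2)] ng_def by simp
  define c where "c = - a / complex_of_real ng"
  have "0 \<le> N (\<lambda>x. f x + c * g x)" using N_nonneg addsc_in assms by blast
  also have "\<dots> = N f + 2 * Re (cnj c * a) + (cmod c)^2 * ng"
    using N_expand assms a_def ng_def by simp
  finally have z: "0 \<le> N f + 2 * Re (cnj c * a) + (cmod c)^2 * ng" .
  have r1: "Re (cnj c * a) = - ((cmod a)^2 / ng)"
  proof -
    have "cnj c * a = - (cnj a * a) / complex_of_real ng" by (simp add: c_def)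
    also have "cnj a * a = complex_of_real ((cmod a)^2)"
      by (metis complex_norm_square mult.commute of_real_power)
    finally show ?thesis by simp
  qed
  have r2: "(cmod c)^2 = (cmod a)^2 / ng^2"
    using ng by (simp add: c_def norm_divide power_divide)
  have "0 \<le> N f - (cmod a)^2 / ng"
    using z unfolding r1 r2 using ng by (simp add: power2_eq_square field_simps)
  then have "(cmod a)^2 \<le> N f * ng" using ng by (simp add: field_simps)
  also have "\<dots> = (hnorm ip f * hnorm ip g)^2"
    using hnorm_sq assms ng_def by (simp add: power_mult_distrib)
  finally show ?thesis unfolding a_def
    using hnorm_nonneg assms by (meson mult_nonneg_nonneg power2_le_imp_le)
qed

lemma tri: assumes "f \<in> H" "g \<in> H"
  shows "hnorm ip (\<lambda>x. f x + g x) \<le> hnorm ip f + hnorm ip g"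
proof -
  have "N (\<lambda>x. f x + g x) = N f + 2 * Re (ip f g) + N g"
    using N_expand[OF assms, of 1] by simp
  also have "Re (ip f g) \<le> hnorm ip f * hnorm ip g"
    using CS[OF assms] complex_Re_le_cmod order_trans by blast
  finally have "N (\<lambda>x. f x + g x) \<le> (hnorm ip f + hnorm ip g)^2"
    using hnorm_sq assms by (simp add: power2_sum)
  then have "sqrt (N (\<lambda>x. f x + g x)) \<le> sqrt ((hnorm ip f + hnorm ip g)^2)"
    using real_sqrt_le_mono by blast
  then show ?thesis unfolding hnorm_def[of ip "\<lambda>x. f x + g x"]
    using hnorm_nonneg assms add_nonneg_nonneg by simp
qed

lemma tri3: assumes "f \<in> H" "g \<in> H" "h \<in> H"
  shows "hnorm ip (\<lambda>x. f x - h x) \<le> hnorm ip (\<lambda>x. f x - g x) + hnorm ip (\<lambda>x. g x - h x)"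
  using tri[OF diff_in[OF assms(1,2)] diff_in[OF assms(2,3)]] by simp

lemma hnorm_sym: assumes "f \<in> H" "g \<in> H"
  shows "hnorm ip (\<lambda>x. f x - g x) = hnorm ip (\<lambda>x. g x - f x)"
proof -
  have "N (\<lambda>x. (-1) * (f x - g x)) = N (\<lambda>x. f x - g x)"
    using N_scale[OF diff_in[OF assms], of "-1"] by simp
  then show ?thesis unfolding hnorm_def by simp
qed

lemma hnorm_cont: assumes "f \<in> H" "g \<in> H"
  shows "\<bar>hnorm ip f - hnorm ip g\<bar> \<le> hnorm ip (\<lambda>x. f x - g x)"
proof -
  have "hnorm ip f \<le> hnorm ip (\<lambda>x. f x - g x) + hnorm ip g"
    using tri[OF diff_in[OF assms] assms(2)] by simp
  moreover have "hnorm ip g \<le> hnorm ip (\<lambda>x. g x - f x) + hnorm ip f"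
    using tri[OF diff_in[OF assms(2,1)] assms(1)] by simp
  ultimately show ?thesis using hnorm_sym[OF assms] by linarith
qed

lemma pointwise: assumes "f \<in> H" "y \<in> X"
  shows "cmod (f y) \<le> hnorm ip f * hnorm ip (ksec X K y)"
  using CS[OF assms(1) ksec_in[OF assms(2)]] repro[OF assms] by simp

lemma orth: assumes r: "r \<in> H" and k: "k \<in> H"
  and le: "\<And>t. N r \<le> N (\<lambda>x. r x + t * k x)"
  shows "ip r k = 0"
proof -
  define a where "a = ip r k"
  define nk where "nk = N k"
  have nk: "nk \<ge> 0" using N_nonneg k nk_def by simp
  define s where "s = 1 / (nk + 1)"
  have s: "s > 0" "s * nk < 1" using nk by (auto simp: s_def field_simps)
  define A where "A = (cmod a)^2"
  have A: "A \<ge> 0" by (simp add: A_def)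
  have "N r \<le> N (\<lambda>x. r x + (- (complex_of_real s * a)) * k x)" by (rule le)
  also have "\<dots> = N r + 2 * Re (cnj (- (complex_of_real s * a)) * a) + (cmod (- (complex_of_real s * a)))^2 * nk"
    unfolding a_def nk_def by (rule N_expand[OF r k])
  also have "cnj (- (complex_of_real s * a)) * a = - complex_of_real (s * A)"
  proof -
    have "cnj a * a = complex_of_real A" unfolding A_def
      by (metis complex_norm_square mult.commute of_real_power)
    then show ?thesis by (simp add: algebra_simps)
  qed
  also have "(cmod (- (complex_of_real s * a)))^2 = s^2 * A"
    using s by (simp add: A_def norm_mult power_mult_distrib)
  finally have "0 \<le> s * A * (s * nk - 2)" by (simp add: algebra_simps power2_eq_square)
  moreover have "s * nk - 2 < 0" using s by simp
  ultimately have "s * A \<le> 0" by (meson mult_pos_neg not_le)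
  then have "A = 0" using s A by (simp add: mult_le_0_iff)
  then show ?thesis unfolding a_def A_def by simp
qed

lemma lim_shift: assumes "A \<in> H" "\<And>n. v n \<in> H" "l \<in> H"
  and lim: "(\<lambda>n. hnorm ip (\<lambda>x. v n x - l x)) \<longlonglongrightarrow> 0"
  shows "(\<lambda>n. hnorm ip (\<lambda>x. A x - v n x)) \<longlonglongrightarrow> hnorm ip (\<lambda>x. A x - l x)"
proof -
  have "(\<lambda>n. hnorm ip (\<lambda>x. A x - v n x) - hnorm ip (\<lambda>x. A x - l x)) \<longlonglongrightarrow> 0"
  proof (rule Lim_null_comparison[OF _ lim], rule always_eventually, rule allI)
    fix n
    have "\<bar>hnorm ip (\<lambda>x. A x - v n x) - hnorm ip (\<lambda>x. A x - l x)\<bar>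
       \<le> hnorm ip (\<lambda>x. (A x - v n x) - (A x - l x))"
      using hnorm_cont diff_in assms by blast
    also have "(\<lambda>x. (A x - v n x) - (A x - l x)) = (\<lambda>x. l x - v n x)" by simp
    also have "hnorm ip \<dots> = hnorm ip (\<lambda>x. v n x - l x)" using hnorm_sym assms by metis
    finally show "norm (hnorm ip (\<lambda>x. A x - v n x) - hnorm ip (\<lambda>x. A x - l x))
       \<le> hnorm ip (\<lambda>x. v n x - l x)" by simp
  qed
  then show ?thesis by (rule LIM_zero_cancel)
qed

lemma kspan_H: "v \<in> kspan X K \<Longrightarrow> v \<in> H"
  by (induction rule: kspan.induct) (auto intro: zero_in addsc_in ksec_in)

lemma kspan_add: "v \<in> kspan X K \<Longrightarrow> u \<in> kspan X K \<Longrightarrow> (\<lambda>x. u x + v x) \<in> kspan X K"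
proof (induction rule: kspan.induct)
  case kzero then show ?case by simp
next
  case (kstep v y c)
  then have "(\<lambda>x. (u x + v x) + c * ksec X K y x) \<in> kspan X K" by (intro kspan.kstep) auto
  then show ?case by (simp add: add.assoc)
qed

lemma kspan_scale: "v \<in> kspan X K \<Longrightarrow> (\<lambda>x. a * v x) \<in> kspan X K"
proof (induction rule: kspan.induct)
  case kzero then show ?case by (simp add: kspan.kzero)
next
  case (kstep v y c)
  then have "(\<lambda>x. a * v x + (a * c) * ksec X K y x) \<in> kspan X K" by (intro kspan.kstep) auto
  then show ?case by (simp add: algebra_simps)
qed

lemma kspan_diff: "u \<in> kspan X K \<Longrightarrow> v \<in> kspan X K \<Longrightarrow> (\<lambda>x. u x - v x) \<in> kspan X K"
  using kspan_add[OF kspan_scale[of v "-1"], of u] by simp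

lemma parallelogram: assumes "a \<in> H" "b \<in> H"
  shows "N (\<lambda>x. a x + b x) + N (\<lambda>x. a x - b x) = 2 * N a + 2 * N b"
  using N_expand[OF assms, of 1] N_expand[OF assms, of "-1"] by simp

lemma density: assumes g: "g \<in> H"
  shows "\<exists>v. (\<forall>n. v n \<in> kspan X K) \<and> (\<lambda>n. hnorm ip (\<lambda>x. v n x - g x)) \<longlonglongrightarrow> 0"
proof -
  define D where "D = (\<lambda>v. hnorm ip (\<lambda>x. g x - v x)) ` kspan X K"
  define d where "d = Inf D"
  define e :: "nat \<Rightarrow> real" where "e n = inverse (real (Suc n))" for n
  have Dne: "D \<noteq> {}" using kspan.kzero D_def by blast
  have Dbdd: "bdd_below D" unfolding D_def
    by (rule bdd_belowI[of _ 0]) (auto intro: hnorm_nonneg diff_in g kspan_H)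
  have dle: "d \<le> hnorm ip (\<lambda>x. g x - v x)" if "v \<in> kspan X K" for v
    unfolding d_def using that Dbdd D_def by (auto intro: cInf_lower)
  have Dpos: "\<And>z. z \<in> D \<Longrightarrow> 0 \<le> z" unfolding D_def
    using hnorm_nonneg diff_in g kspan_H by blast
  have d0: "0 \<le> d"
    unfolding d_def using Dne Dpos by (rule cInf_greatest)
  have epos: "e n > 0" for n by (simp add: e_def)
  have "\<exists>v. v \<in> kspan X K \<and> N (\<lambda>x. g x - v x) < d^2 + e n" for n
  proof -
    have "d = sqrt (d^2)" using d0 by simp
    also have "sqrt (d^2) < sqrt (d^2 + e n)" using epos[of n] by (intro real_sqrt_less_mono) simp
    finally have "d < sqrt (d^2 + e n)" .
    then obtain z where "z \<in> D" "z < sqrt (d^2 + e n)"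
      using cInf_less_iff[OF Dne Dbdd] d_def by blast
    then obtain v where v: "v \<in> kspan X K" "hnorm ip (\<lambda>x. g x - v x) < sqrt (d^2 + e n)"
      unfolding D_def by blast
    have "(hnorm ip (\<lambda>x. g x - v x))^2 < (sqrt (d^2 + e n))^2"
      using v(2) hnorm_nonneg[OF diff_in[OF g kspan_H[OF v(1)]]]
      by (intro power_strict_mono) auto
    also have "(sqrt (d^2 + e n))^2 = d^2 + e n" using epos[of n]
      by (intro real_sqrt_pow2) (simp add: add_nonneg_nonneg less_imp_le)
    finally have "(hnorm ip (\<lambda>x. g x - v x))^2 < d^2 + e n" .
    then show ?thesis using v(1) hnorm_sq diff_in g kspan_H by metis
  qed
  then obtain v where v: "\<And>n. v n \<in> kspan X K" "\<And>n. N (\<lambda>x. g x - v n x) < d^2 + e n"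
    by metis
  have vH: "v n \<in> H" for n using v(1) kspan_H by blast
  have cN: "N (\<lambda>x. v m x - v n x) < 2 * e m + 2 * e n" for m n
  proof -
    define a where "a = (\<lambda>x. g x - v n x)"
    define b where "b = (\<lambda>x. g x - v m x)"
    define w where "w = (\<lambda>x. (1/2) * (v m x + v n x))"
    have aH: "a \<in> H" and bH: "b \<in> H" unfolding a_def b_def using g vH diff_in by auto
    have w: "w \<in> kspan X K" unfolding w_def using kspan_scale kspan_add v(1) by blast
    have wH: "w \<in> H" using w kspan_H by blast
    have "(\<lambda>x. a x + b x) = (\<lambda>x. 2 * (g x - w x))"
      unfolding a_def b_def w_def by (auto simp: algebra_simps)
    then have "N (\<lambda>x. a x + b x) = 4 * N (\<lambda>x. g x - w x)"
      using N_scale[OF diff_in[OF g wH], of 2] by simp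
    also have "N (\<lambda>x. g x - w x) = (hnorm ip (\<lambda>x. g x - w x))^2"
      using hnorm_sq diff_in g wH by metis
    finally have ab: "N (\<lambda>x. a x + b x) \<ge> 4 * d^2"
      using dle[OF w] d0 power_mono by fastforce
    have "(\<lambda>x. a x - b x) = (\<lambda>x. v m x - v n x)" unfolding a_def b_def by simp
    then have "N (\<lambda>x. v m x - v n x) = 2 * N a + 2 * N b - N (\<lambda>x. a x + b x)"
      using parallelogram[OF aH bH] by simp
    then show ?thesis using ab v(2)[of n] v(2)[of m] unfolding a_def b_def by simp
  qed
  have Cau: "\<forall>\<epsilon>>0. \<exists>M. \<forall>m\<ge>M. \<forall>n\<ge>M. hnorm ip (\<lambda>x. v m x - v n x) < \<epsilon>"
  proof (intro allI impI)
    fix \<epsilon> :: real assume "\<epsilon> > 0"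
    then have "\<epsilon>^2 / 4 > 0" by simp
    then obtain M where M: "e M < \<epsilon>^2 / 4" using reals_Archimedean e_def by metis
    have "hnorm ip (\<lambda>x. v m x - v n x) < \<epsilon>" if "m \<ge> M" "n \<ge> M" for m n
    proof -
      have "e m \<le> e M" "e n \<le> e M" using that unfolding e_def
        by (auto intro!: le_imp_inverse_le)
      then have "N (\<lambda>x. v m x - v n x) < \<epsilon>^2" using cN[of m n] M by linarith
      then have "sqrt (N (\<lambda>x. v m x - v n x)) < sqrt (\<epsilon>^2)" using real_sqrt_less_iff by blast
      then show ?thesis unfolding hnorm_def using \<open>\<epsilon> > 0\<close> by simp
    qed
    then show "\<exists>M. \<forall>m\<ge>M. \<forall>n\<ge>M. hnorm ip (\<lambda>x. v m x - v n x) < \<epsilon>" by blast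
  qed
  obtain l where lH: "l \<in> H" and lim: "(\<lambda>n. hnorm ip (\<lambda>x. v n x - l x)) \<longlonglongrightarrow> 0"
    using complete[of v] vH Cau by blast
  define r where "r = (\<lambda>x. g x - l x)"
  have rH: "r \<in> H" unfolding r_def using diff_in g lH by blast
  have "hnorm ip r \<le> d"
  proof (rule LIMSEQ_le)
    show "(\<lambda>n. hnorm ip (\<lambda>x. g x - v n x)) \<longlonglongrightarrow> hnorm ip r"
      unfolding r_def using lim_shift[OF g vH lH lim] .
    have "(\<lambda>n. sqrt (d^2 + e n)) \<longlonglongrightarrow> sqrt (d^2 + 0)"
      unfolding e_def by (intro tendsto_intros LIMSEQ_inverse_real_of_nat)
    then show "(\<lambda>n. sqrt (d^2 + e n)) \<longlonglongrightarrow> d" using d0 by simp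
    show "\<exists>N. \<forall>n\<ge>N. hnorm ip (\<lambda>x. g x - v n x) \<le> sqrt (d^2 + e n)"
    proof (intro exI allI impI)
      fix n
      have "hnorm ip (\<lambda>x. g x - v n x) = sqrt (N (\<lambda>x. g x - v n x))" by (simp add: hnorm_def)
      also have "\<dots> \<le> sqrt (d^2 + e n)" using v(2)[of n] by simp
      finally show "hnorm ip (\<lambda>x. g x - v n x) \<le> sqrt (d^2 + e n)" .
    qed
  qed
  have r0: "r y = 0" if y: "y \<in> X" for y
  proof -
    define k where "k = ksec X K y"
    have kH: "k \<in> H" unfolding k_def using ksec_in y by blast
    have "N r \<le> N (\<lambda>x. r x + t * k x)" for t
    proof -
      define A where "A = (\<lambda>x. g x + t * k x)"
      have AH: "A \<in> H" unfolding A_def using addsc_in g kH by blast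
      have "d \<le> hnorm ip (\<lambda>x. A x - l x)"
      proof (rule LIMSEQ_le_const)
        show "(\<lambda>n. hnorm ip (\<lambda>x. A x - v n x)) \<longlonglongrightarrow> hnorm ip (\<lambda>x. A x - l x)"
          using lim_shift[OF AH vH lH lim] .
        show "\<exists>N. \<forall>n\<ge>N. d \<le> hnorm ip (\<lambda>x. A x - v n x)"
        proof (intro exI allI impI)
          fix n
          have "(\<lambda>x. v n x + (- t) * ksec X K y x) \<in> kspan X K"
            using kspan.kstep[OF v(1) y] by blast
          from dle[OF this] show "d \<le> hnorm ip (\<lambda>x. A x - v n x)"
            unfolding A_def k_def by (simp add: algebra_simps)
        qed
      qed
      also have "(\<lambda>x. A x - l x) = (\<lambda>x. r x + t * k x)" unfolding A_def r_def by (auto simp: algebra_simps)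
      finally have "hnorm ip r \<le> hnorm ip (\<lambda>x. r x + t * k x)" using \<open>hnorm ip r \<le> d\<close> by linarith
      then have "(hnorm ip r)^2 \<le> (hnorm ip (\<lambda>x. r x + t * k x))^2"
        using hnorm_nonneg[OF rH] power_mono by blast
      then show ?thesis using hnorm_sq rH addsc_in kH by metis
    qed
    then have "ip r k = 0" using orth rH kH by blast
    then show ?thesis using repro[OF rH y] k_def by simp
  qed
  have "g = l"
    using ext_eq[OF g lH] r0 unfolding r_def by simp
  then show ?thesis using v(1) lim by blast
qed

lemma ip_diff_r: "f \<in> H \<Longrightarrow> g \<in> H \<Longrightarrow> h \<in> H \<Longrightarrow> ip h (\<lambda>x. f x - g x) = ip h f - ip h g"
  using ip_add_r[of f "\<lambda>x. (-1) * g x" h] ip_scale_r[of g h "-1"] scale_in[of g "-1"] by simp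

lemma pt_conv: assumes "\<And>n. u n \<in> H" "f \<in> H" "y \<in> X"
  and lim: "(\<lambda>n. hnorm ip (\<lambda>x. u n x - f x)) \<longlonglongrightarrow> 0"
  shows "(\<lambda>n. u n y) \<longlonglongrightarrow> f y"
proof -
  have "(\<lambda>n. hnorm ip (\<lambda>x. u n x - f x) * hnorm ip (ksec X K y)) \<longlonglongrightarrow> 0 * hnorm ip (ksec X K y)"
    by (intro tendsto_intros lim)
  then have l2: "(\<lambda>n. hnorm ip (\<lambda>x. u n x - f x) * hnorm ip (ksec X K y)) \<longlonglongrightarrow> 0" by simp
  have "(\<lambda>n. u n y - f y) \<longlonglongrightarrow> 0"
  proof (rule Lim_null_comparison[OF _ l2], rule always_eventually, rule allI)
    fix n
    show "norm (u n y - f y) \<le> hnorm ip (\<lambda>x. u n x - f x) * hnorm ip (ksec X K y)"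
      using pointwise[OF diff_in[OF assms(1)[of n] assms(2)] assms(3)] by simp
  qed
  then show ?thesis by (rule LIM_zero_cancel)
qed

lemma norm_conv: assumes "\<And>n. u n \<in> H" "f \<in> H"
  and lim: "(\<lambda>n. hnorm ip (\<lambda>x. u n x - f x)) \<longlonglongrightarrow> 0"
  shows "(\<lambda>n. hnorm ip (u n)) \<longlonglongrightarrow> hnorm ip f"
proof -
  have "(\<lambda>n. hnorm ip (u n) - hnorm ip f) \<longlonglongrightarrow> 0"
  proof (rule Lim_null_comparison[OF _ lim], rule always_eventually, rule allI)
    fix n
    show "norm (hnorm ip (u n) - hnorm ip f) \<le> hnorm ip (\<lambda>x. u n x - f x)"
      using hnorm_cont[OF assms(1)[of n] assms(2)] by simp
  qed
  then show ?thesis by (rule LIM_zero_cancel)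
qed

end

locale rkF = rk X H ip K for X :: "'a::real_normed_vector set" and H ip K +
  fixes K0 :: "real \<Rightarrow> complex" and F G :: "'a \<Rightarrow> 'a"
  assumes rad: "\<And>x y. x \<in> X \<Longrightarrow> y \<in> X \<Longrightarrow> K x y = K0 (norm (x - y))"
  and FX: "\<And>x. x \<in> X \<Longrightarrow> F x \<in> X" and GX: "\<And>x. x \<in> X \<Longrightarrow> G x \<in> X"
  and FG: "\<And>y. y \<in> X \<Longrightarrow> F (G y) = y"
  and iso: "\<And>x y. x \<in> X \<Longrightarrow> y \<in> X \<Longrightarrow> norm (F x - F y) = norm (x - y)"
begin

abbreviation T where "T \<equiv> koopman X F"

lemma T_ksec: assumes y: "y \<in> X" shows "T (ksec X K y) = ksec X K (G y)"
proof (rule ext)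
  fix x
  show "T (ksec X K y) x = ksec X K (G y) x"
  proof (cases "x \<in> X")
    case True
    have "K (F x) y = K0 (norm (F x - F (G y)))" using rad FX True y FG by simp
    also have "\<dots> = K x (G y)" using iso True GX y rad by simp
    finally show ?thesis using True FX unfolding koopman_def ksec_def by simp
  qed (simp add: koopman_def ksec_def)
qed

lemma T_addsc: "T (\<lambda>x. f x + c * g x) = (\<lambda>x. T f x + c * T g x)"
  by (auto simp: koopman_def)
lemma T_add: "T (\<lambda>x. f x + g x) = (\<lambda>x. T f x + T g x)"
  by (auto simp: koopman_def)
lemma T_diff: "T (\<lambda>x. f x - g x) = (\<lambda>x. T f x - T g x)"
  by (auto simp: koopman_def)
lemma T_zero: "T (\<lambda>x. 0) = (\<lambda>x. 0)"
  by (auto simp: koopman_def)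

lemma kspan_T: "v \<in> kspan X K \<Longrightarrow> T v \<in> H \<and> (\<forall>w\<in>H. T w \<in> H \<longrightarrow> ip (T v) (T w) = ip v w)"
proof (induction rule: kspan.induct)
  case kzero
  then show ?case using T_zero zero_in ip_zero_l by simp
next
  case (kstep v y c)
  have vH: "v \<in> H" using kstep kspan_H by blast
  have k1: "ksec X K y \<in> H" using ksec_in kstep by blast
  have k2: "ksec X K (G y) \<in> H" using ksec_in GX kstep by blast
  have Te: "T (\<lambda>x. v x + c * ksec X K y x) = (\<lambda>x. T v x + c * ksec X K (G y) x)"
    using T_addsc T_ksec kstep by simp
  have "T (\<lambda>x. v x + c * ksec X K y x) \<in> H" unfolding Te using addsc_in kstep k2 by blast
  moreover have "ip (T (\<lambda>x. v x + c * ksec X K y x)) (T w) = ip (\<lambda>x. v x + c * ksec X K y x) w"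
    if w: "w \<in> H" "T w \<in> H" for w
  proof -
    have "ip (ksec X K (G y)) (T w) = cnj (ip (T w) (ksec X K (G y)))" using ip_cnj w k2 by blast
    also have "ip (T w) (ksec X K (G y)) = T w (G y)" using repro w GX kstep by simp
    also have "T w (G y) = w y" using GX FG kstep unfolding koopman_def by simp
    also have "w y = ip w (ksec X K y)" using repro w kstep by simp
    also have "cnj (ip w (ksec X K y)) = ip (ksec X K y) w" using ip_cnj[OF w(1) k1] by simp
    finally have kk: "ip (ksec X K (G y)) (T w) = ip (ksec X K y) w" .
    show ?thesis unfolding Te using kstep w ip_addsc_l k1 k2 vH kk by simp
  qed
  ultimately show ?case by blast
qed

lemma T_iso: assumes g: "g \<in> H" shows "T g \<in> H \<and> N (T g) = N g"
proof -
  obtain v where v: "\<And>n. v n \<in> kspan X K" and lim: "(\<lambda>n. hnorm ip (\<lambda>x. v n x - g x)) \<longlonglongrightarrow> 0"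
    using density[OF g] by blast
  have vH: "v n \<in> H" for n using v kspan_H by blast
  have TvH: "T (v n) \<in> H" for n using v kspan_T by blast
  have Tn: "hnorm ip (T u) = hnorm ip u" if "u \<in> kspan X K" for u
    using kspan_T[OF that] kspan_H[OF that] unfolding hnorm_def by simp
  have Cau: "\<forall>\<epsilon>>0. \<exists>M. \<forall>m\<ge>M. \<forall>n\<ge>M. hnorm ip (\<lambda>x. T (v m) x - T (v n) x) < \<epsilon>"
  proof (intro allI impI)
    fix \<epsilon> :: real assume e: "\<epsilon> > 0"
    then obtain M where M: "\<And>n. n \<ge> M \<Longrightarrow> norm (hnorm ip (\<lambda>x. v n x - g x) - 0) < \<epsilon> / 2"
      using lim unfolding LIMSEQ_iff by (metis half_gt_zero)
    have "hnorm ip (\<lambda>x. T (v m) x - T (v n) x) < \<epsilon>" if "m \<ge> M" "n \<ge> M" for m n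
    proof -
      have "hnorm ip (\<lambda>x. T (v m) x - T (v n) x) = hnorm ip (T (\<lambda>x. v m x - v n x))"
        by (simp add: T_diff)
      also have "\<dots> = hnorm ip (\<lambda>x. v m x - v n x)" using Tn kspan_diff v by blast
      also have "\<dots> \<le> hnorm ip (\<lambda>x. v m x - g x) + hnorm ip (\<lambda>x. g x - v n x)"
        using tri3 vH g by blast
      also have "hnorm ip (\<lambda>x. g x - v n x) = hnorm ip (\<lambda>x. v n x - g x)" using hnorm_sym vH g by metis
      finally show ?thesis using M[OF that(1)] M[OF that(2)] by simp
    qed
    then show "\<exists>M. \<forall>m\<ge>M. \<forall>n\<ge>M. hnorm ip (\<lambda>x. T (v m) x - T (v n) x) < \<epsilon>" by blast
  qed
  obtain h where hH: "h \<in> H" and limh: "(\<lambda>n. hnorm ip (\<lambda>x. T (v n) x - h x)) \<longlonglongrightarrow> 0"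
    using complete[of "\<lambda>n. T (v n)"] TvH Cau by blast
  have hT: "h = T g"
  proof (rule ext)
    fix x
    show "h x = T g x"
    proof (cases "x \<in> X")
      case True
      have "(\<lambda>n. T (v n) x) \<longlonglongrightarrow> h x" using pt_conv[OF TvH hH True limh] .
      moreover have "(\<lambda>n. T (v n) x) \<longlonglongrightarrow> g (F x)"
        using pt_conv[OF vH g FX[OF True] lim] True unfolding koopman_def by simp
      ultimately have "h x = g (F x)" using LIMSEQ_unique by blast
      then show ?thesis using True unfolding koopman_def by simp
    next
      case False
      then show ?thesis using outside hH unfolding koopman_def by simp
    qed
  qed
  have "(\<lambda>n. hnorm ip (T (v n))) \<longlonglongrightarrow> hnorm ip h" using norm_conv[OF TvH hH limh] .
  moreover have "(\<lambda>n. hnorm ip (T (v n))) \<longlonglongrightarrow> hnorm ip g" using norm_conv[OF vH g lim] Tn v by simp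
  ultimately have "hnorm ip h = hnorm ip g" using LIMSEQ_unique by blast
  then have "N h = N g" using hnorm_sq hH g by metis
  then show ?thesis using hT hH by simp
qed

lemma T_ip: assumes f: "f \<in> H" and g: "g \<in> H" shows "ip (T f) (T g) = ip f g"
proof -
  have Tf: "T f \<in> H" and Tg: "T g \<in> H" using T_iso f g by auto
  have "Re (ip (T f) (T g)) = Re (ip f g)"
  proof -
    have "N (\<lambda>x. T f x + 1 * T g x) = N (\<lambda>x. f x + 1 * g x)"
      using T_iso[OF addsc_in[OF f g, of 1]] T_addsc[of f 1 g] by simp
    then show ?thesis using N_expand[OF Tf Tg, of 1] N_expand[OF f g, of 1] T_iso f g by simp
  qed
  moreover have "Im (ip (T f) (T g)) = Im (ip f g)"
  proof -
    have "N (\<lambda>x. T f x + \<i> * T g x) = N (\<lambda>x. f x + \<i> * g x)"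
      using T_iso[OF addsc_in[OF f g, of "\<i>"]] T_addsc[of f "\<i>" g] by simp
    then show ?thesis using N_expand[OF Tf Tg, of "\<i>"] N_expand[OF f g, of "\<i>"] T_iso f g by simp
  qed
  ultimately show ?thesis by (simp add: complex_eq_iff)
qed

end

theorem mainTheorem19:
  fixes X :: "'a::real_normed_vector set"
    and H :: "('a \<Rightarrow> complex) set"
    and ip :: "('a \<Rightarrow> complex) \<Rightarrow> ('a \<Rightarrow> complex) \<Rightarrow> complex"
    and K :: "'a \<Rightarrow> 'a \<Rightarrow> complex"
    and K0 :: "real \<Rightarrow> complex"
    and F :: "'a \<Rightarrow> 'a"
  assumes "is_rkhs X H ip K"
    and "\<forall>x\<in>X. \<forall>y\<in>X. K x y = K0 (norm (x - y))"
    and "inj_on K0 {0..}"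
    and "bij_betw F X X"
  shows "unitary_op H ip (koopman X F) \<longleftrightarrow>
         (\<forall>x\<in>X. \<forall>y\<in>X. norm (F x - F y) = norm (x - y))"
proof -
  interpret rk X H ip K by unfold_locales (rule assms(1))
  define G where "G = inv_into X F"
  have FX: "\<And>x. x \<in> X \<Longrightarrow> F x \<in> X" using assms(4) bij_betwE by blast
  have GX: "\<And>x. x \<in> X \<Longrightarrow> G x \<in> X" unfolding G_def
    using assms(4) bij_betw_inv_into bij_betwE by blast
  have FG: "\<And>y. y \<in> X \<Longrightarrow> F (G y) = y" unfolding G_def
    using assms(4) bij_betw_inv_into_right by metis
  have GF: "\<And>x. x \<in> X \<Longrightarrow> G (F x) = x" unfolding G_def
    using assms(4) bij_betw_inv_into_left by metis
  have rad: "\<And>x y. x \<in> X \<Longrightarrow> y \<in> X \<Longrightarrow> K x y = K0 (norm (x - y))" using assms(2) by blast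
  have Kip: "ip (ksec X K y) (ksec X K x) = K x y" if "x \<in> X" "y \<in> X" for x y
    using repro[OF ksec_in[OF that(2)] that(1)] that unfolding ksec_def by simp
  show ?thesis
  proof
    assume U: "unitary_op H ip (koopman X F)"
    then obtain S where SH: "\<And>g. g \<in> H \<Longrightarrow> S g \<in> H"
      and adj: "\<And>f g. f \<in> H \<Longrightarrow> g \<in> H \<Longrightarrow> ip (koopman X F f) g = ip f (S g)"
      and TS: "\<And>f. f \<in> H \<Longrightarrow> koopman X F (S f) = f"
      unfolding unitary_op_def by blast
    have Sk: "S (ksec X K y) = ksec X K (F y)" if y: "y \<in> X" for y
    proof -
      have k1: "ksec X K y \<in> H" using ksec_in y by blast
      have k2: "ksec X K (F y) \<in> H" using ksec_in FX y by blast
      define u where "u = (\<lambda>x. S (ksec X K y) x - ksec X K (F y) x)"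
      have uH: "u \<in> H" unfolding u_def using diff_in SH k1 k2 by blast
      have TuH: "koopman X F u \<in> H" using U uH unfolding unitary_op_def by blast
      have "ip u (S (ksec X K y)) = ip (koopman X F u) (ksec X K y)" using adj[OF uH k1] by simp
      also have "\<dots> = koopman X F u y" using repro[OF TuH y] by simp
      also have "\<dots> = u (F y)" using y unfolding koopman_def by simp
      also have "\<dots> = ip u (ksec X K (F y))" using repro[OF uH FX[OF y]] .
      finally have e1: "ip u (S (ksec X K y)) = ip u (ksec X K (F y))" .
      have "ip u u = ip u (S (ksec X K y)) - ip u (ksec X K (F y))"
        using ip_diff_r[OF SH[OF k1] k2 uH] by (simp add: u_def)
      then have "ip u u = 0" using e1 by simp
      then have u0: "u = (\<lambda>x. 0)" using ip_zero_eq uH by blast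
      show ?thesis
      proof (rule ext)
        fix x
        have "u x = 0" using u0 by simp
        then show "S (ksec X K y) x = ksec X K (F y) x" unfolding u_def by simp
      qed
    qed
    show "\<forall>x\<in>X. \<forall>y\<in>X. norm (F x - F y) = norm (x - y)"
    proof (intro ballI)
      fix x y assume x: "x \<in> X" and y: "y \<in> X"
      have "ip (ksec X K y) (ksec X K x) = ip (koopman X F (S (ksec X K y))) (ksec X K x)"
        using TS ksec_in y by simp
      also have "\<dots> = ip (S (ksec X K y)) (S (ksec X K x))" using adj SH ksec_in x y by blast
      also have "\<dots> = ip (ksec X K (F y)) (ksec X K (F x))" using Sk x y by simp
      finally have "K x y = K (F x) (F y)" using Kip x y FX by simp
      then have "K0 (norm (F x - F y)) = K0 (norm (x - y))" using rad x y FX by simp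
      then show "norm (F x - F y) = norm (x - y)" using assms(3) by (auto dest: inj_onD)
    qed
  next
    assume iso: "\<forall>x\<in>X. \<forall>y\<in>X. norm (F x - F y) = norm (x - y)"
    have isoG: "norm (G x - G y) = norm (x - y)" if "x \<in> X" "y \<in> X" for x y
    proof -
      have "norm (G x - G y) = norm (F (G x) - F (G y))" using iso GX that by simp
      also have "\<dots> = norm (x - y)" using FG that by simp
      finally show ?thesis .
    qed
    interpret A: rkF X H ip K K0 F G
      by unfold_locales (use assms(1) rad FX GX FG iso in auto)
    interpret B: rkF X H ip K K0 G F
      by unfold_locales (use assms(1) rad FX GX GF isoG in auto)
    have TS: "koopman X F (koopman X G f) = f" if "f \<in> H" for f
      using that FX GF outside[OF that] unfolding koopman_def by (auto simp: fun_eq_iff)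
    have ST: "koopman X G (koopman X F f) = f" if "f \<in> H" for f
      using that GX FG outside[OF that] unfolding koopman_def by (auto simp: fun_eq_iff)
    show "unitary_op H ip (koopman X F)"
      unfolding unitary_op_def
    proof (intro conjI)
      show "\<forall>f\<in>H. koopman X F f \<in> H" using A.T_iso by blast
      show "\<forall>f\<in>H. \<forall>g\<in>H. koopman X F (\<lambda>x. f x + g x) = (\<lambda>x. koopman X F f x + koopman X F g x)"
        using A.T_add by blast
      show "\<forall>c. \<forall>f\<in>H. koopman X F (\<lambda>x. c * f x) = (\<lambda>x. c * koopman X F f x)"
        by (auto simp: koopman_def)
      show "\<exists>C. \<forall>f\<in>H. hnorm ip (koopman X F f) \<le> C * hnorm ip f"
        by (rule exI[of _ 1]) (auto simp: hnorm_def A.T_iso)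
      show "\<exists>S. (\<forall>g\<in>H. S g \<in> H) \<and> (\<forall>f\<in>H. \<forall>g\<in>H. ip (koopman X F f) g = ip f (S g)) \<and>
          (\<forall>f\<in>H. koopman X F (S f) = f \<and> S (koopman X F f) = f)"
      proof (intro exI[of _ "koopman X G"] conjI ballI)
        fix g assume "g \<in> H" then show "koopman X G g \<in> H" using B.T_iso by blast
      next
        fix f g assume f: "f \<in> H" and g: "g \<in> H"
        have "ip (koopman X F f) g = ip (koopman X F f) (koopman X F (koopman X G g))" using TS g by simp
        also have "\<dots> = ip f (koopman X G g)" using A.T_ip f B.T_iso g by blast
        finally show "ip (koopman X F f) g = ip f (koopman X G g)" .
      next
        fix f assume "f \<in> H"
        then show "koopman X F (koopman X G f) = f" "koopman X G (koopman X F f) = f" using TS ST by auto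
      qed
    qed
  qed
qed

end
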